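(* Fix a device $k$ and a training round $t$, with dropout rate $\gamma_{k,t}\in[0,1)$ and regularization coefficient $\lambda_t>0$. Let $\mathcal D_k$ be the local dataset of device $k$, and for $j$ drawn uniformly from $\{1,\dots,|\mathcal D_k|\}$ let $\mathcal D_k^j=\mathcal D_k\setminus\{\boldsymbol x_j\}$. Write $\hat{\boldsymbol\theta}=\boldsymbol\theta_{\ell_{k,\lambda_t}}(\mathcal D_k)$ and $\hat{\boldsymbol\theta}^j=\boldsymbol\theta_{\ell_{k,\lambda_t}}(\mathcal D_k^j)$. Assume: (i) the loss is $\eta$-Lipschitz in the parameters, i.e. $\theta\mapsto \ell_{k,\lambda_t}(\theta,\boldsymbol x)$ is $\eta$-Lipschitz for every sample $\boldsymbol x$; (ii) $\hat{\boldsymbol\theta}^j$ is close to $\hat{\boldsymbol\theta}$, in the sense that the second-order Taylor expansion of $\ell_{k,\lambda_t}(\cdot;\mathcal D_k)$ around its minimizer $\hat{\boldsymbol\theta}$ (where its gradient vanishes) is exact at $\hat{\boldsymbol\theta}^j$; (iii) the Hessian $\nabla^2\ell_{k,\lambda_t}(\hat{\boldsymbol\theta};\mathcal D_k)$ is positive semidefinite, and the Hessian of the unregularized empirical loss at $\hat{\boldsymbol\theta}$ has eigendecomposition $\nabla^2\ell_k(\hat{\boldsymbol\theta})=U_{k,t}\,\mathrm{diag}(\Lambda_{k,t})\,U_{k,t}^{-1}$ with $\Lambda_{k,t,\min}=\min\{\Lambda_{k,t,1},\dots,\Lambda_{k,t,m}\}$. Then $$\mathbb E_{\mathcal D_k,\,j}\Big|\ell_{k,\lambda_t}(\hat{\boldsymbol\theta}^j,\boldsymbol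 x_j)-\ell_{k,\lambda_t}(\hat{\boldsymbol\theta},\boldsymbol x_j)\Big|\le \frac{2\eta^2}{\big(\Lambda_{k,t,\min}+2\lambda_t(2\gamma_{k,t}-\gamma_{k,t}^2)\big)\,|\mathcal D_k|}.$$
   Context: Parameters $\boldsymbol\theta$ of a model are perturbations of fixed pre-trained parameters $\boldsymbol\theta_0$; $\ell(\boldsymbol\theta,\boldsymbol x)$ is the per-sample loss, and the local dataset $\mathcal D_k$ consists of i.i.d. samples (the outer expectation is over the draw of $\mathcal D_k$). The dropout-induced sparsity regularization is $\mathbb E_{\boldsymbol d}\|\boldsymbol d\odot(\boldsymbol\theta-\boldsymbol\theta_0)\|_2^2$ where $\boldsymbol d$ has i.i.d. Bernoulli entries equal to $1$ with probability $2\gamma_{k,t}-\gamma_{k,t}^2$; this equals $(2\gamma_{k,t}-\gamma_{k,t}^2)\|\boldsymbol\theta-\boldsymbol\theta_0\|_2^2$. The regularized per-sample loss is $\ell_{k,\lambda_t}(\boldsymbol\theta,\boldsymbol x)=\ell(\boldsymbol\theta,\boldsymbol x)+\lambda_t(2\gamma_{k,t}-\gamma_{k,t}^2)\|\boldsymbol\theta-\boldsymbol\theta_0\|_2^2$, and for a finite dataset $S$ the regularized empirical loss is $\ell_{k,\lambda_t}(\boldsymbol\theta;S)=\frac1{|S|}\sum_{\boldsymbol x\in S}\ell(\boldsymbol\theta,\boldsymbol x)+\lambda_t(2\gamma_{k,t}-\gamma_{k,t}^2)\|\boldsymbol\theta-\boldsymbol\theta_0\|_2^2$, with unregularized part $\ell_k(\boldsymbol\theta)=\frac1{|\mathcal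 D_k|}\sum_{\boldsymbol x\in\mathcal D_k}\ell(\boldsymbol\theta,\boldsymbol x)$. $\boldsymbol\theta_{\ell_{k,\lambda_t}}(S)$ denotes the (local) minimizer of $\ell_{k,\lambda_t}(\cdot;S)$. *)

theory Defs
  imports "HOL-Analysis.Analysis" "HOL-Probability.Probability"
begin

definition dropout_coef :: "real \<Rightarrow> real" where
  "dropout_coef \<gamma> = 2 * \<gamma> - \<gamma>^2"

definition reg_loss ::
  "('p::real_normed_vector \<Rightarrow> 'x \<Rightarrow> real) \<Rightarrow> real \<Rightarrow> real \<Rightarrow> 'p \<Rightarrow> 'p \<Rightarrow> 'x \<Rightarrow> real" where
  "reg_loss loss lam \<gamma> \<theta>0 \<theta> x = loss \<theta> x + lam * dropout_coef \<gamma> * (norm (\<theta> - \<theta>0))^2"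

definition emp_loss :: "('p \<Rightarrow> 'x \<Rightarrow> real) \<Rightarrow> (nat \<Rightarrow> 'x) \<Rightarrow> nat set \<Rightarrow> 'p \<Rightarrow> real" where
  "emp_loss loss D I \<theta> = (\<Sum>i\<in>I. loss \<theta> (D i)) / real (card I)"

definition emp_reg_loss ::
  "('p::real_normed_vector \<Rightarrow> 'x \<Rightarrow> real) \<Rightarrow> real \<Rightarrow> real \<Rightarrow> 'p \<Rightarrow> (nat \<Rightarrow> 'x) \<Rightarrow> nat set \<Rightarrow> 'p \<Rightarrow> real" where
  "emp_reg_loss loss lam \<gamma> \<theta>0 D I \<theta> =
     emp_loss loss D I \<theta> + lam * dropout_coef \<gamma> * (norm (\<theta> - \<theta>0))^2"

definition has_hessian :: "(real^'m \<Rightarrow> real) \<Rightarrow> real^'m^'m \<Rightarrow> real^'m \<Rightarrow> bool" where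
  "has_hessian f H a \<longleftrightarrow>
     (\<exists>g S. open S \<and> a \<in> S \<and> (\<forall>y\<in>S. (f has_derivative (\<lambda>h. g y \<bullet> h)) (at y)) \<and>
            (g has_derivative (\<lambda>h. H *v h)) (at a))"

definition diag_mat :: "real^'m \<Rightarrow> real^'m^'m" where
  "diag_mat v = (\<chi> i j. if i = j then v $ i else 0)"

end

theory Submission
  imports Defs
begin

lemma hess_claim:
  fixes f :: "'a::real_inner \<Rightarrow> real" and g :: "'a \<Rightarrow> 'a"
  assumes S: "open S" "a \<in> S" and fd: "\<forall>y\<in>S. (f has_derivative (\<lambda>h. g y \<bullet> h)) (at y)"
    and gd: "(g has_derivative L) (at a)" and e: "e > 0"
  shows "\<exists>\<delta>>0. \<forall>t. 0 < t \<and> t < \<delta> \<longrightarrow>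
     \<bar>(f (a + t*\<^sub>R u + t*\<^sub>R v) - f (a + t*\<^sub>R u) - f (a + t*\<^sub>R v) + f a) - t^2 * (L v \<bullet> u)\<bar>
       \<le> e * (2*(norm u + norm v)^2) * t^2"
proof -
  obtain r where r: "r > 0" "ball a r \<subseteq> S" using S open_contains_ball by blast
  have bl: "bounded_linear L" using gd has_derivative_bounded_linear by blast
  obtain d where d: "d > 0" "\<forall>y. norm (y - a) < d \<longrightarrow> norm (g y - g a - L (y - a)) \<le> e * norm (y - a)"
    using gd e unfolding has_derivative_at_alt by blast
  define K where "K = norm u + norm v + 1"
  have K: "K > 0" "norm u + norm v < K" unfolding K_def by (auto intro: add_nonneg_pos)
  define \<delta> where "\<delta> = min r d / K"
  have "\<delta> > 0" unfolding \<delta>_def using r d K by auto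
  moreover have "\<bar>(f (a + t*\<^sub>R u + t*\<^sub>R v) - f (a + t*\<^sub>R u) - f (a + t*\<^sub>R v) + f a) - t^2 * (L v \<bullet> u)\<bar>
       \<le> e * (2*(norm u + norm v)^2) * t^2" if t: "0 < t" "t < \<delta>" for t
  proof -
    have tK: "t * K < min r d" using t K unfolding \<delta>_def by (simp add: pos_less_divide_eq)
    have small: "norm (s*\<^sub>R u + t*\<^sub>R v) \<le> t * (norm u + norm v)" "norm (s*\<^sub>R u + t*\<^sub>R v) < min r d"
      "norm (s*\<^sub>R u) \<le> t * (norm u + norm v)" "norm (s*\<^sub>R u) < min r d"
      if s: "0 \<le> s" "s \<le> t" for s
    proof -
      have "norm (s*\<^sub>R u + t*\<^sub>R v) \<le> s * norm u + t * norm v"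
        using s t by (metis abs_of_nonneg less_imp_le norm_scaleR norm_triangle_ineq)
      also have "\<dots> \<le> t * (norm u + norm v)" using s by (simp add: distrib_left mult_right_mono)
      finally show 1: "norm (s*\<^sub>R u + t*\<^sub>R v) \<le> t * (norm u + norm v)" .
      have "t * (norm u + norm v) \<le> t * K" using K t by simp
      then show "norm (s*\<^sub>R u + t*\<^sub>R v) < min r d" using 1 tK by linarith
      have "norm (s*\<^sub>R u) \<le> t * norm u" using s by (simp add: mult_right_mono)
      also have "\<dots> \<le> t * (norm u + norm v)" using t by (simp add: distrib_left)
      finally show 2: "norm (s*\<^sub>R u) \<le> t * (norm u + norm v)" .
      have "t * (norm u + norm v) \<le> t * K" using K t by simp
      then show "norm (s*\<^sub>R u) < min r d" using 2 tK by linarith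
    qed
    define \<phi> where "\<phi> s = f (a + s*\<^sub>R u + t*\<^sub>R v) - f (a + s*\<^sub>R u)" for s
    define \<phi>' where "\<phi>' s = (g (a + s*\<^sub>R u + t*\<^sub>R v) - g (a + s*\<^sub>R u)) \<bullet> u" for s
    have der: "(\<phi> has_real_derivative \<phi>' s) (at s)" if s: "0 \<le> s" "s \<le> t" for s
    proof -
      have dd: "\<And>w. dist a (a + w) = norm w" by (metis add_diff_cancel_left' dist_commute dist_norm)
      have in1: "a + s*\<^sub>R u + t*\<^sub>R v \<in> S" using small(2)[OF s]
        by (auto simp: dd add.assoc intro!: subsetD[OF r(2)])
      have in2: "a + s*\<^sub>R u \<in> S" using small(4)[OF s] by (auto simp: dd intro!: subsetD[OF r(2)])
      have l1: "((\<lambda>s. a + s*\<^sub>R u + t*\<^sub>R v) has_derivative (\<lambda>h. h *\<^sub>R u)) (at s)"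
        by (auto intro!: derivative_eq_intros)
      have l2: "((\<lambda>s. a + s*\<^sub>R u) has_derivative (\<lambda>h. h *\<^sub>R u)) (at s)"
        by (auto intro!: derivative_eq_intros)
      have c1: "((\<lambda>s. f (a + s*\<^sub>R u + t*\<^sub>R v)) has_derivative (\<lambda>h. g (a + s*\<^sub>R u + t*\<^sub>R v) \<bullet> (h *\<^sub>R u))) (at s)"
        using has_derivative_compose[OF l1, of f] fd in1 by blast
      have c2: "((\<lambda>s. f (a + s*\<^sub>R u)) has_derivative (\<lambda>h. g (a + s*\<^sub>R u) \<bullet> (h *\<^sub>R u))) (at s)"
        using has_derivative_compose[OF l2, of f] fd in2 by blast
      have "(\<phi> has_derivative (\<lambda>h. g (a + s*\<^sub>R u + t*\<^sub>R v) \<bullet> (h *\<^sub>R u) - g (a + s*\<^sub>R u) \<bullet> (h *\<^sub>R u))) (at s)"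
        unfolding \<phi>_def by (rule has_derivative_diff[OF c1 c2])
      moreover have "(\<lambda>h. g (a + s*\<^sub>R u + t*\<^sub>R v) \<bullet> (h *\<^sub>R u) - g (a + s*\<^sub>R u) \<bullet> (h *\<^sub>R u)) = (*) (\<phi>' s)"
        unfolding \<phi>'_def by (auto simp: algebra_simps inner_diff_left)
      ultimately show ?thesis unfolding has_field_derivative_def by simp
    qed
    obtain z where z: "0 < z" "z < t" "\<phi> t - \<phi> 0 = (t - 0) * \<phi>' z"
      using MVT2[of 0 t \<phi> \<phi>'] der t by auto
    have \<Delta>: "\<phi> t - \<phi> 0 = f (a + t*\<^sub>R u + t*\<^sub>R v) - f (a + t*\<^sub>R u) - f (a + t*\<^sub>R v) + f a"
      unfolding \<phi>_def by simp
    define w1 where "w1 = z*\<^sub>R u + t*\<^sub>R v"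
    define w2 where "w2 = z*\<^sub>R u"
    define E1 where "E1 = g (a + w1) - g a - L w1"
    define E2 where "E2 = g (a + w2) - g a - L w2"
    have nE1: "norm E1 \<le> e * (t * (norm u + norm v))"
    proof -
      have "norm E1 \<le> e * norm w1" using d(2)[rule_format, of "a + w1"] small(2)[of z] z
        unfolding E1_def by (simp add: w1_def)
      also have "\<dots> \<le> e * (t * (norm u + norm v))" using small(1)[of z] z e unfolding w1_def by simp
      finally show ?thesis .
    qed
    have nE2: "norm E2 \<le> e * (t * (norm u + norm v))"
    proof -
      have "norm E2 \<le> e * norm w2" using d(2)[rule_format, of "a + w2"] small(4)[of z] z
        unfolding E2_def by (simp add: w2_def)
      also have "\<dots> \<le> e * (t * (norm u + norm v))" using small(3)[of z] z e unfolding w2_def by simp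
      finally show ?thesis .
    qed
    have Lw: "L w1 - L w2 = t *\<^sub>R L v"
      unfolding w1_def w2_def using bl by (simp add: linear_simps bounded_linear.linear)
    have eq: "\<phi>' z - t * (L v \<bullet> u) = (E1 - E2) \<bullet> u"
    proof -
      have "g (a + z*\<^sub>R u + t*\<^sub>R v) - g (a + z*\<^sub>R u) = E1 - E2 + (L w1 - L w2)"
        unfolding E1_def E2_def w1_def w2_def by (simp add: add.assoc)
      then show ?thesis unfolding \<phi>'_def Lw by (simp add: inner_add_left inner_diff_left)
    qed
    have "\<bar>(E1 - E2) \<bullet> u\<bar> \<le> norm (E1 - E2) * norm u" by (rule Cauchy_Schwarz_ineq2)
    also have "\<dots> \<le> (norm E1 + norm E2) * (norm u + norm v)"
      by (intro mult_mono norm_triangle_ineq4) auto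
    also have "\<dots> \<le> (2 * e * (t * (norm u + norm v))) * (norm u + norm v)"
      using nE1 nE2 by (intro mult_right_mono) auto
    finally have b: "\<bar>\<phi>' z - t * (L v \<bullet> u)\<bar> \<le> 2 * e * t * (norm u + norm v)^2"
      unfolding eq by (simp add: power2_eq_square mult_ac)
    have "\<bar>(f (a + t*\<^sub>R u + t*\<^sub>R v) - f (a + t*\<^sub>R u) - f (a + t*\<^sub>R v) + f a) - t^2 * (L v \<bullet> u)\<bar>
        = t * \<bar>\<phi>' z - t * (L v \<bullet> u)\<bar>"
    proof -
      have "t * \<phi>' z - t^2 * (L v \<bullet> u) = t * (\<phi>' z - t * (L v \<bullet> u))" by (simp add: algebra_simps power2_eq_square)
      then show ?thesis using z(3) t unfolding \<Delta>[symmetric] by (simp add: abs_mult)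
    qed
    also have "\<dots> \<le> t * (2 * e * t * (norm u + norm v)^2)" using b t by simp
    also have "\<dots> = e * (2*(norm u + norm v)^2) * t^2" by (simp add: power2_eq_square)
    finally show ?thesis .
  qed
  ultimately show ?thesis by blast
qed

lemma hess_sym:
  fixes f :: "'a::real_inner \<Rightarrow> real" and g :: "'a \<Rightarrow> 'a"
  assumes S: "open S" "a \<in> S" and fd: "\<forall>y\<in>S. (f has_derivative (\<lambda>h. g y \<bullet> h)) (at y)"
    and gd: "(g has_derivative L) (at a)"
  shows "L v \<bullet> u = L u \<bullet> v"
proof -
  define C where "C = 2*(norm u + norm v)^2"
  define D where "D = L v \<bullet> u - L u \<bullet> v"
  have C0: "C \<ge> 0" unfolding C_def by simp
  have key: "\<bar>D\<bar> \<le> 2 * e * C" if e: "e > 0" for e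
  proof -
    obtain \<delta>1 where d1: "\<delta>1 > 0" "\<forall>t. 0 < t \<and> t < \<delta>1 \<longrightarrow>
     \<bar>(f (a + t*\<^sub>R u + t*\<^sub>R v) - f (a + t*\<^sub>R u) - f (a + t*\<^sub>R v) + f a) - t^2 * (L v \<bullet> u)\<bar>
       \<le> e * C * t^2"
      using hess_claim[OF S fd gd e, of u v] unfolding C_def by blast
    obtain \<delta>2 where d2: "\<delta>2 > 0" "\<forall>t. 0 < t \<and> t < \<delta>2 \<longrightarrow>
     \<bar>(f (a + t*\<^sub>R v + t*\<^sub>R u) - f (a + t*\<^sub>R v) - f (a + t*\<^sub>R u) + f a) - t^2 * (L u \<bullet> v)\<bar>
       \<le> e * C * t^2"
      using hess_claim[OF S fd gd e, of v u] unfolding C_def by (auto simp: add.commute)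
    define t where "t = min \<delta>1 \<delta>2 / 2"
    have t: "0 < t" "t < \<delta>1" "t < \<delta>2" unfolding t_def using d1 d2 by auto
    have e1: "a + t*\<^sub>R v + t*\<^sub>R u = a + t*\<^sub>R u + t*\<^sub>R v" by (simp add: algebra_simps)
    define X where "X = f (a + t*\<^sub>R u + t*\<^sub>R v) - f (a + t*\<^sub>R u) - f (a + t*\<^sub>R v) + f a"
    have b1: "\<bar>X - t^2 * (L v \<bullet> u)\<bar> \<le> e * C * t^2"
      using d1(2) t unfolding X_def by blast
    have b2: "\<bar>X - t^2 * (L u \<bullet> v)\<bar> \<le> e * C * t^2"
      using d2(2) t unfolding X_def e1 by (simp add: algebra_simps)
    have "t^2 * \<bar>D\<bar> = \<bar>(X - t^2 * (L u \<bullet> v)) - (X - t^2 * (L v \<bullet> u))\<bar>"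
    proof -
      have "(X - t^2 * (L u \<bullet> v)) - (X - t^2 * (L v \<bullet> u)) = t^2 * D" unfolding D_def by (simp add: algebra_simps)
      then show ?thesis by (simp add: abs_mult)
    qed
    also have "\<dots> \<le> (2 * e * C) * t^2" using b1 b2 by linarith
    finally show ?thesis using t by (simp add: mult.commute)
  qed
  show ?thesis
  proof (rule ccontr)
    assume "L v \<bullet> u \<noteq> L u \<bullet> v"
    then have D0: "\<bar>D\<bar> > 0" unfolding D_def by simp
    define e where "e = \<bar>D\<bar> / (4 * C + 4)"
    have e0: "e > 0" unfolding e_def using D0 C0 by simp
    have "2 * e * C = \<bar>D\<bar> * (2 * C / (4 * C + 4))" unfolding e_def by (simp add: field_simps)
    also have "\<dots> < \<bar>D\<bar> * 1" using D0 C0 by (intro mult_strict_left_mono) (auto simp: field_simps)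
    finally show False using key[OF e0] by simp
  qed
qed


lemma diag_mv: "diag_mat L *v z = (\<chi> i. L$i * z$i)"
proof -
  have "(\<Sum>j\<in>UNIV. (if i = j then L$i else 0) * z$j) = L$i * z$i" for i
  proof -
    have "(\<Sum>j\<in>UNIV. (if i = j then L$i else 0) * z$j) = (\<Sum>j\<in>UNIV. if i = j then L$i * z$j else 0)"
      by (rule sum.cong) auto
    then show ?thesis by simp
  qed
  then show ?thesis by (simp add: vec_eq_iff matrix_vector_mult_def diag_mat_def)
qed

lemma mv_expand: "(U::real^'m^'m) *v z = (\<Sum>i\<in>UNIV. z$i *\<^sub>R (U *v axis i 1))"
proof -
  have bz: "(\<Sum>i\<in>UNIV. z$i *\<^sub>R axis i 1) = z" using basis_expansion[of z] by (simp add: scalar_mult_eq_scaleR)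
  have lin: "linear ((*v) U)" by (rule matrix_vector_mul_linear)
  have "U *v z = U *v (\<Sum>i\<in>UNIV. z$i *\<^sub>R axis i 1)" using bz by simp
  also have "\<dots> = (\<Sum>i\<in>UNIV. z$i *\<^sub>R (U *v axis i 1))"
    by (simp add: linear_sum[OF lin] linear_scale[OF lin])
  finally show ?thesis .
qed

lemma bil_expand:
  fixes U :: "real^'m^'m"
  shows "(U *v z) \<bullet> (U *v w) = (\<Sum>i\<in>UNIV. \<Sum>j\<in>UNIV. z$i * w$j * ((U *v axis i 1) \<bullet> (U *v axis j 1)))"
  apply (subst mv_expand[of U z], subst mv_expand[of U w])
  apply (simp add: inner_sum_left inner_sum_right sum_distrib_left mult.assoc)
  apply (subst sum.swap)
  apply (simp add: mult_ac)
  done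

lemma eig_lower:
  fixes H U :: "real^'m^'m" and L :: "real^'m"
  assumes sym: "\<And>x y. x \<bullet> (H *v y) = y \<bullet> (H *v x)" and inv: "invertible U"
    and HU: "H = U ** diag_mat L ** matrix_inv U"
  shows "Min (range (\<lambda>i. L$i)) * (v \<bullet> v) \<le> v \<bullet> (H *v v)"
proof -
  define Ui where "Ui = matrix_inv U"
  have Ui: "U ** Ui = mat 1" "Ui ** U = mat 1"
    using inv unfolding invertible_def Ui_def matrix_inv_def by (metis (mono_tags, lifting) someI_ex)+
  have HU': "H ** U = U ** diag_mat L"
    unfolding HU Ui_def[symmetric] by (metis Ui(2) matrix_mul_assoc matrix_mul_rid)
  have E1: "H *v (U *v z) = U *v (\<chi> i. L$i * z$i)" for z
    by (simp add: matrix_vector_mul_assoc HU' diag_mv[symmetric])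
  define G where "G i j = (U *v axis i 1) \<bullet> (U *v axis j 1)" for i j
  have Gs: "G i j * L$j = G i j * L$i" for i j
  proof -
    have a: "(\<chi> k. L$k * (axis j 1 :: real^'m)$k) = L$j *\<^sub>R axis j 1" for j
      by (simp add: vec_eq_iff axis_def)
    have "(U *v axis i 1) \<bullet> (H *v (U *v axis j 1)) = (U *v axis j 1) \<bullet> (H *v (U *v axis i 1))" by (rule sym)
    then show ?thesis unfolding E1 a G_def
      by (simp add: matrix_vector_mult_scaleR inner_commute)
  qed
  define m where "m = Min (range (\<lambda>i. L$i))"
  have mL: "m \<le> L$i" for i unfolding m_def by (rule Min_le) auto
  define x where "x = Ui *v v"
  have vx: "v = U *v x" unfolding x_def by (simp add: matrix_vector_mul_assoc Ui)
  define y where "y = (\<chi> i. sqrt (L$i - m) * x$i)"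
  have trm: "x$i * (L$j * x$j) * G i j - m * (x$i * x$j * G i j) = y$i * y$j * G i j" for i j
  proof (cases "G i j = 0")
    case True then show ?thesis by simp
  next
    case False
    then have "L$i = L$j" using Gs[of i j] by simp
    then have yy: "y$i * y$j = (L$j - m) * x$i * x$j" unfolding y_def using mL[of j]
      by (simp add: algebra_simps)
    have "x$i * (L$j * x$j) * G i j - m * (x$i * x$j * G i j) = ((L$j - m) * x$i * x$j) * G i j"
      by (simp add: algebra_simps)
    also have "\<dots> = y$i*y$j*G i j" by (simp only: yy)
    finally show ?thesis .
  qed
  have bx: "(U *v z) \<bullet> (U *v w) = (\<Sum>i\<in>UNIV. \<Sum>j\<in>UNIV. z$i * w$j * G i j)" for z w
    unfolding G_def by (rule bil_expand)
  have 1: "v \<bullet> (H *v v) = (\<Sum>i\<in>UNIV. \<Sum>j\<in>UNIV. x$i * (L$j * x$j) * G i j)"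
    by (subst (1 2) vx) (simp only: E1 bx vec_lambda_beta)
  have 2: "v \<bullet> v = (\<Sum>i\<in>UNIV. \<Sum>j\<in>UNIV. x$i * x$j * G i j)"
    by (subst (1 2) vx) (simp only: bx)
  have "v \<bullet> (H *v v) - m * (v \<bullet> v) = (\<Sum>i\<in>UNIV. \<Sum>j\<in>UNIV. x$i * (L$j * x$j) * G i j - m * (x$i * x$j * G i j))"
    unfolding 1 2 by (simp add: sum_subtractf sum_distrib_left)
  also have "\<dots> = (\<Sum>i\<in>UNIV. \<Sum>j\<in>UNIV. y$i * y$j * G i j)" by (simp only: trm)
  also have "\<dots> = (U *v y) \<bullet> (U *v y)" by (simp only: bx)
  also have "\<dots> \<ge> 0" by simp
  finally show ?thesis unfolding m_def by simp
qed


lemma norm_sq_deriv: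
  fixes y \<theta>0 :: "'a::real_inner"
  shows "((\<lambda>y. c * (norm (y - \<theta>0))^2) has_derivative (\<lambda>h. ((2*c) *\<^sub>R (y - \<theta>0)) \<bullet> h)) (at y)"
proof -
  have f: "(\<lambda>y. c * (norm (y - \<theta>0))^2) = (\<lambda>y. c * ((y - \<theta>0) \<bullet> (y - \<theta>0)))"
    by (simp add: power2_norm_eq_inner)
  have "((\<lambda>y. (y - \<theta>0) \<bullet> (y - \<theta>0)) has_derivative (\<lambda>h. (y - \<theta>0) \<bullet> (h - 0) + (h - 0) \<bullet> (y - \<theta>0))) (at y)"
    by (intro has_derivative_inner has_derivative_diff has_derivative_ident has_derivative_const)
  then have "((\<lambda>y. c * ((y - \<theta>0) \<bullet> (y - \<theta>0))) has_derivative (\<lambda>h. c * ((y - \<theta>0) \<bullet> (h - 0) + (h - 0) \<bullet> (y - \<theta>0)))) (at y)"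
    by (rule has_derivative_mult_right)
  moreover have "(\<lambda>h. c * ((y - \<theta>0) \<bullet> (h - 0) + (h - 0) \<bullet> (y - \<theta>0))) = (\<lambda>h. ((2*c) *\<^sub>R (y - \<theta>0)) \<bullet> h)"
    by (auto simp: inner_commute algebra_simps)
  ultimately show ?thesis unfolding f by simp
qed

lemma hess_rel:
  fixes E :: "real^'m \<Rightarrow> real"
  assumes hr: "has_hessian (\<lambda>\<theta>. E \<theta> + c * (norm (\<theta> - \<theta>0))^2) Hr a" and hk: "has_hessian E Hk a"
  shows "Hr *v h = Hk *v h + (2*c) *\<^sub>R h"
proof -
  obtain g1 S1 where 1: "open S1" "a \<in> S1"
    "\<forall>y\<in>S1. ((\<lambda>\<theta>. E \<theta> + c * (norm (\<theta> - \<theta>0))^2) has_derivative (\<lambda>h. g1 y \<bullet> h)) (at y)"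
    "(g1 has_derivative (\<lambda>h. Hr *v h)) (at a)"
    using hr unfolding has_hessian_def by blast
  obtain g2 S2 where 2: "open S2" "a \<in> S2"
    "\<forall>y\<in>S2. (E has_derivative (\<lambda>h. g2 y \<bullet> h)) (at y)"
    "(g2 has_derivative (\<lambda>h. Hk *v h)) (at a)"
    using hk unfolding has_hessian_def by blast
  have geq: "g1 y = g2 y + (2*c) *\<^sub>R (y - \<theta>0)" if y: "y \<in> S1 \<inter> S2" for y
  proof -
    have d2: "((\<lambda>\<theta>. E \<theta> + c * (norm (\<theta> - \<theta>0))^2) has_derivative
        (\<lambda>h. g2 y \<bullet> h + ((2*c) *\<^sub>R (y - \<theta>0)) \<bullet> h)) (at y)"
      using 2(3) y by (intro has_derivative_add norm_sq_deriv) auto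
    have "(\<lambda>h. g1 y \<bullet> h) = (\<lambda>h. g2 y \<bullet> h + ((2*c) *\<^sub>R (y - \<theta>0)) \<bullet> h)"
      using has_derivative_unique[OF 1(3)[rule_format] d2] y by blast
    then have "\<And>h. (g1 y - (g2 y + (2*c) *\<^sub>R (y - \<theta>0))) \<bullet> h = 0"
      by (metis (no_types) diff_self inner_add_left inner_diff_left)
    then have "(g1 y - (g2 y + (2*c) *\<^sub>R (y - \<theta>0))) = 0" by (meson inner_eq_zero_iff)
    then show ?thesis by simp
  qed
  have d: "((\<lambda>y. g2 y + (2*c) *\<^sub>R (y - \<theta>0)) has_derivative (\<lambda>h. Hk *v h + (2*c) *\<^sub>R h)) (at a)"
    using 2(4) by (auto intro!: derivative_eq_intros)
  have "(g1 has_derivative (\<lambda>h. Hk *v h + (2*c) *\<^sub>R h)) (at a)"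
    by (rule has_derivative_transform_within_open[OF d, of "S1 \<inter> S2"]) (use 1 2 geq in auto)
  then have "(\<lambda>h. Hr *v h) = (\<lambda>h. Hk *v h + (2*c) *\<^sub>R h)"
    using has_derivative_unique 1(4) by blast
  then show ?thesis by metis
qed

theorem theorem1:
  fixes M :: "'x measure"
    and loss :: "real^'m \<Rightarrow> 'x \<Rightarrow> real"
    and \<theta>0 :: "real^'m"
    and \<gamma> lam \<eta> :: real
    and n :: nat
    and thetahat :: "(nat \<Rightarrow> 'x) \<Rightarrow> nat set \<Rightarrow> real^'m"
    and Hreg Hk U :: "(nat \<Rightarrow> 'x) \<Rightarrow> real^'m^'m"
    and \<Lambda> :: "(nat \<Rightarrow> 'x) \<Rightarrow> real^'m"
  assumes M: "prob_space M"
    and gamma: "0 \<le> \<gamma>" "\<gamma> < 1"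
    and lam: "lam > 0"
    and n: "n \<ge> 1"
    and lip: "\<forall>x. lipschitz_on \<eta> UNIV (\<lambda>\<theta>. reg_loss loss lam \<gamma> \<theta>0 \<theta> x)"
    and minD: "\<forall>D \<in> space (PiM {..<n} (\<lambda>_. M)). \<forall>\<theta>.
        emp_reg_loss loss lam \<gamma> \<theta>0 D {..<n} (thetahat D {..<n})
          \<le> emp_reg_loss loss lam \<gamma> \<theta>0 D {..<n} \<theta>"
    and minDj: "\<forall>D \<in> space (PiM {..<n} (\<lambda>_. M)). \<forall>j<n. \<forall>\<theta>.
        emp_reg_loss loss lam \<gamma> \<theta>0 D ({..<n} - {j}) (thetahat D ({..<n} - {j}))
          \<le> emp_reg_loss loss lam \<gamma> \<theta>0 D ({..<n} - {j}) \<theta>"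
    and hess_reg: "\<forall>D \<in> space (PiM {..<n} (\<lambda>_. M)).
        has_hessian (emp_reg_loss loss lam \<gamma> \<theta>0 D {..<n}) (Hreg D) (thetahat D {..<n})"
    and taylor: "\<forall>D \<in> space (PiM {..<n} (\<lambda>_. M)). \<forall>j<n.
        emp_reg_loss loss lam \<gamma> \<theta>0 D {..<n} (thetahat D ({..<n} - {j}))
          = emp_reg_loss loss lam \<gamma> \<theta>0 D {..<n} (thetahat D {..<n})
            + (1/2) * ((thetahat D ({..<n} - {j}) - thetahat D {..<n})
                       \<bullet> (Hreg D *v (thetahat D ({..<n} - {j}) - thetahat D {..<n})))"
    and psd: "\<forall>D \<in> space (PiM {..<n} (\<lambda>_. M)). \<forall>v. 0 \<le> v \<bullet> (Hreg D *v v)"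
    and hess_k: "\<forall>D \<in> space (PiM {..<n} (\<lambda>_. M)).
        has_hessian (emp_loss loss D {..<n}) (Hk D) (thetahat D {..<n})"
    and eig: "\<forall>D \<in> space (PiM {..<n} (\<lambda>_. M)).
        invertible (U D) \<and> Hk D = U D ** diag_mat (\<Lambda> D) ** matrix_inv (U D)"
  shows "(\<integral>\<^sup>+ D. (\<integral>\<^sup>+ j. ennreal \<bar>reg_loss loss lam \<gamma> \<theta>0 (thetahat D ({..<n} - {j})) (D j)
                                 - reg_loss loss lam \<gamma> \<theta>0 (thetahat D {..<n}) (D j)\<bar>
                \<partial>measure_pmf (pmf_of_set {..<n})) \<partial>PiM {..<n} (\<lambda>_. M))
         \<le> (\<integral>\<^sup>+ D. ennreal (2 * \<eta>^2)
                  / ennreal ((Min (range (\<lambda>i. \<Lambda> D $ i)) + 2 * lam * dropout_coef \<gamma>) * real n)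
              \<partial>PiM {..<n} (\<lambda>_. M))"
proof -
  let ?A = "{..<n}"
  let ?P = "PiM {..<n} (\<lambda>_. M)"
  define c where "c = dropout_coef \<gamma>"
  have eta0: "0 \<le> \<eta>" using lip lipschitz_on_nonneg by blast
  have core: "\<bar>reg_loss loss lam \<gamma> \<theta>0 (thetahat D (?A - {j})) (D j)
                - reg_loss loss lam \<gamma> \<theta>0 (thetahat D ?A) (D j)\<bar>
        \<le> \<eta> * norm (thetahat D (?A - {j}) - thetahat D ?A)
      \<and> real n * ((1/2) * ((Min (range (\<lambda>i. \<Lambda> D $ i)) + 2 * lam * c)
            * (norm (thetahat D (?A - {j}) - thetahat D ?A))^2))
        \<le> \<eta> * norm (thetahat D (?A - {j}) - thetahat D ?A)"
    if D: "D \<in> space ?P" and j: "j < n" for D j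
  proof -
    define th where "th = thetahat D ?A"
    define tj where "tj = thetahat D (?A - {j})"
    define d where "d = tj - th"
    define FA where "FA = emp_reg_loss loss lam \<gamma> \<theta>0 D ?A"
    define FJ where "FJ = emp_reg_loss loss lam \<gamma> \<theta>0 D (?A - {j})"
    define rj where "rj = (\<lambda>\<theta>. reg_loss loss lam \<gamma> \<theta>0 \<theta> (D j))"
    have lipj: "\<bar>rj tj - rj th\<bar> \<le> \<eta> * norm d"
      using lipschitz_onD[OF lip[rule_format, of "D j"], of tj th]
      unfolding rj_def d_def by (simp add: dist_real_def dist_norm)
    have ident: "real n * FA \<theta> = (real n - 1) * FJ \<theta> + rj \<theta>" for \<theta>
    proof -
      have cA: "card ?A = n" by simp
      have cJ: "card (?A - {j}) = n - 1" using j by simp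
      have sm: "(\<Sum>i\<in>?A. loss \<theta> (D i)) = loss \<theta> (D j) + (\<Sum>i\<in>?A - {j}. loss \<theta> (D i))"
        using j by (subst sum.remove[of ?A j]) auto
      have n0: "real n \<noteq> 0" using n by simp
      have J: "(real n - 1) * FJ \<theta> = (\<Sum>i\<in>?A - {j}. loss \<theta> (D i)) + (real n - 1) * (lam * dropout_coef \<gamma> * (norm (\<theta> - \<theta>0))^2)"
      proof (cases "n = 1")
        case True
        then have E: "?A - {j} = {}" using j by auto
        show ?thesis using True unfolding FJ_def emp_reg_loss_def emp_loss_def E by simp
      next
        case False
        then have "real n - 1 \<noteq> 0" using n by simp
        moreover have "real (n - 1) = real n - 1" using n by simp
        ultimately show ?thesis unfolding FJ_def emp_reg_loss_def emp_loss_def cJ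
          by (simp add: field_simps)
      qed
      have "real n * FA \<theta> = (\<Sum>i\<in>?A. loss \<theta> (D i)) + real n * (lam * dropout_coef \<gamma> * (norm (\<theta> - \<theta>0))^2)"
        unfolding FA_def emp_reg_loss_def emp_loss_def cA using n0 by (simp add: field_simps)
      then show ?thesis unfolding J sm rj_def reg_loss_def by (simp add: algebra_simps)
    qed
    have minj: "FJ tj \<le> FJ th" using minDj D j unfolding FJ_def tj_def th_def by blast
    have n1: "real n - 1 \<ge> 0" using n by simp
    have "real n * (FA tj - FA th) = (real n - 1) * (FJ tj - FJ th) + (rj tj - rj th)"
      using ident[of tj] ident[of th] by (simp add: algebra_simps)
    also have "\<dots> \<le> rj tj - rj th" using minj n1 by (simp add: mult_nonneg_nonpos)
    also have "\<dots> \<le> \<eta> * norm d" using lipj by simp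
    finally have up: "real n * (FA tj - FA th) \<le> \<eta> * norm d" .
    have tay: "FA tj - FA th = (1/2) * (d \<bullet> (Hreg D *v d))"
      using taylor D j unfolding FA_def tj_def th_def d_def by auto
    have FAe: "emp_reg_loss loss lam \<gamma> \<theta>0 D ?A = (\<lambda>\<theta>. emp_loss loss D ?A \<theta> + (lam * c) * (norm (\<theta> - \<theta>0))^2)"
      unfolding emp_reg_loss_def c_def by auto
    have hr: "has_hessian (\<lambda>\<theta>. emp_loss loss D ?A \<theta> + (lam * c) * (norm (\<theta> - \<theta>0))^2) (Hreg D) th"
      using hess_reg D unfolding th_def FAe[symmetric] by blast
    have hk: "has_hessian (emp_loss loss D ?A) (Hk D) th"
      using hess_k D unfolding th_def by blast
    have rel: "Hreg D *v d = Hk D *v d + (2*(lam*c)) *\<^sub>R d" by (rule hess_rel[OF hr hk])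
    have sym: "x \<bullet> (Hk D *v y) = y \<bullet> (Hk D *v x)" for x y
    proof -
      obtain g S where "open S" "th \<in> S" "\<forall>y\<in>S. (emp_loss loss D ?A has_derivative (\<lambda>h. g y \<bullet> h)) (at y)"
        "(g has_derivative (\<lambda>h. Hk D *v h)) (at th)"
        using hk unfolding has_hessian_def by blast
      from hess_sym[OF this, of y x] show ?thesis by (simp add: inner_commute)
    qed
    have eg: "Min (range (\<lambda>i. \<Lambda> D $ i)) * (d \<bullet> d) \<le> d \<bullet> (Hk D *v d)"
      using eig_lower[OF sym, of "U D" "\<Lambda> D" d] eig D by blast
    have "(Min (range (\<lambda>i. \<Lambda> D $ i)) + 2 * lam * c) * (norm d)^2 \<le> d \<bullet> (Hreg D *v d)"
      unfolding rel using eg by (simp add: inner_add_right power2_norm_eq_inner algebra_simps)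
    then have "real n * ((1/2) * ((Min (range (\<lambda>i. \<Lambda> D $ i)) + 2 * lam * c) * (norm d)^2))
        \<le> real n * (FA tj - FA th)"
      unfolding tay by (intro mult_left_mono) auto
    with up have q: "real n * ((1/2) * ((Min (range (\<lambda>i. \<Lambda> D $ i)) + 2 * lam * c) * (norm d)^2)) \<le> \<eta> * norm d"
      by linarith
    show ?thesis using lipj q unfolding rj_def d_def tj_def th_def by simp
  qed
  show ?thesis
  proof (rule nn_integral_mono)
    fix D assume D: "D \<in> space ?P"
    define \<mu> where "\<mu> = Min (range (\<lambda>i. \<Lambda> D $ i)) + 2 * lam * c"
    define RHS where "RHS = ennreal (2 * \<eta>^2)
                  / ennreal ((Min (range (\<lambda>i. \<Lambda> D $ i)) + 2 * lam * dropout_coef \<gamma>) * real n)"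
    have RHSe: "RHS = ennreal (2 * \<eta>^2) / ennreal (\<mu> * real n)" unfolding RHS_def \<mu>_def c_def ..
    have pt: "ennreal \<bar>reg_loss loss lam \<gamma> \<theta>0 (thetahat D (?A - {j})) (D j)
                                 - reg_loss loss lam \<gamma> \<theta>0 (thetahat D ?A) (D j)\<bar> \<le> RHS"
      if j: "j < n" for j
    proof -
      define X where "X = \<bar>reg_loss loss lam \<gamma> \<theta>0 (thetahat D (?A - {j})) (D j)
                                 - reg_loss loss lam \<gamma> \<theta>0 (thetahat D ?A) (D j)\<bar>"
      define nd where "nd = norm (thetahat D (?A - {j}) - thetahat D ?A)"
      have a: "X \<le> \<eta> * nd" and b: "real n * ((1/2) * (\<mu> * nd^2)) \<le> \<eta> * nd"
        using core[OF D j] unfolding X_def nd_def \<mu>_def by auto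
      have nd0: "nd \<ge> 0" unfolding nd_def by simp
      have n0: "real n > 0" using n by simp
      show ?thesis
      proof (cases "\<mu> > 0")
        case True
        have "X \<le> 2 * \<eta>^2 / (\<mu> * real n)"
        proof (cases "nd = 0")
          case True
          then have "X \<le> 0" using a by simp
          moreover have "0 \<le> 2 * \<eta>^2 / (\<mu> * real n)" using \<open>\<mu> > 0\<close> n0 by simp
          ultimately show ?thesis by linarith
        next
          case False
          then have ndp: "nd > 0" using nd0 by simp
          have "nd * (real n * \<mu> * nd) \<le> nd * (2 * \<eta>)"
            using b by (simp add: power2_eq_square algebra_simps)
          then have "real n * \<mu> * nd \<le> 2 * \<eta>" using ndp by simp
          then have "nd \<le> 2 * \<eta> / (\<mu> * real n)" using True n0
            by (simp add: pos_le_divide_eq mult_ac)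
          then have "\<eta> * nd \<le> \<eta> * (2 * \<eta> / (\<mu> * real n))" using eta0 by (rule mult_left_mono)
          moreover have "\<eta> * (2 * \<eta> / (\<mu> * real n)) = 2 * \<eta>^2 / (\<mu> * real n)"
            by (simp add: power2_eq_square)
          ultimately show ?thesis using a by linarith
        qed
        then show ?thesis unfolding RHSe X_def[symmetric]
          using True n0 by (simp add: divide_ennreal ennreal_leI)
      next
        case False
        then have "\<mu> * real n \<le> 0" using n0 by (simp add: mult_nonpos_nonneg)
        then have z: "ennreal (\<mu> * real n) = 0" by (rule ennreal_neg)
        show ?thesis
        proof (cases "\<eta> = 0")
          case True
          then have "X \<le> 0" using a by simp
          then have "X = 0" unfolding X_def by simp
          then show ?thesis unfolding X_def[symmetric] by simp
        next
          case False
          then have "RHS = top" unfolding RHSe z using ennreal_divide_zero by simp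
          then show ?thesis by simp
        qed
      qed
    qed
    have sp: "set_pmf (pmf_of_set ?A) = ?A" using n by (intro set_pmf_of_set) (auto simp: lessThan_empty_iff)
    have "(\<integral>\<^sup>+ j. ennreal \<bar>reg_loss loss lam \<gamma> \<theta>0 (thetahat D (?A - {j})) (D j)
                                 - reg_loss loss lam \<gamma> \<theta>0 (thetahat D ?A) (D j)\<bar>
                \<partial>measure_pmf (pmf_of_set ?A)) \<le> (\<integral>\<^sup>+ j. RHS \<partial>measure_pmf (pmf_of_set ?A))"
      by (rule nn_integral_mono_AE) (simp add: AE_measure_pmf_iff sp pt)
    also have "\<dots> = RHS" by (simp add: measure_pmf.emeasure_space_1)
    finally show "(\<integral>\<^sup>+ j. ennreal \<bar>reg_loss loss lam \<gamma> \<theta>0 (thetahat D (?A - {j})) (D j)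
                                 - reg_loss loss lam \<gamma> \<theta>0 (thetahat D ?A) (D j)\<bar>
                \<partial>measure_pmf (pmf_of_set ?A)) \<le> RHS" .
  qed
qed

end
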